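(* Let $n\in\mathbb N$, let $\lambda$ be an eigenvalue of $\mathfrak P^{(n)}_3+\mathfrak P^{(n)}_4$, and let $e\in\mathbb R^n$ be a corresponding unit eigenvector. (i) If $\lambda\ne1-\frac1n$, then $\langle e,\mathfrak P^{(n)}_1e\rangle=\langle e,\mathfrak P^{(n)}_2e\rangle=1-\frac1{2n}-\frac\lambda2$. (ii) If $\lambda=1-\frac1n$, then $\langle e,\mathfrak P^{(n)}_1e\rangle=0$ and $\langle e,\mathfrak P^{(n)}_2e\rangle=1$ when $n$ is even, while $\langle e,\mathfrak P^{(n)}_1e\rangle=1$ and $\langle e,\mathfrak P^{(n)}_2e\rangle=0$ when $n$ is odd.
   Context: For $n\in\mathbb N$, $\mathfrak P^{(n)}_1,\dots,\mathfrak P^{(n)}_4\in M_n(\mathbb R)$ denote orthogonal projections (real symmetric idempotent matrices) such that (i) $\mathfrak P^{(n)}_1+\dots+\mathfrak P^{(n)}_4=(2-\frac1n)I_n$; (ii) $\operatorname{rk}\mathfrak P^{(n)}_1=\lfloor\frac n2\rfloor-(-1)^n$ and $\operatorname{rk}\mathfrak P^{(n)}_i=\lfloor\frac n2\rfloor$ for $i=2,3,4$; (iii) the only subspaces of $\mathbb C^n$ invariant under all four matrices are $0$ and $\mathbb C^n$. Such quadruples exist for every $n$, and any two of them are simultaneously unitarily equivalent; moreover, any quadruple of orthogonal projections on a Hilbert space summing to $(2-\frac1n)I$ with no nontrivial common invariant closed subspace is unitarily equivalent to one of the four cyclic shifts $(\mathfrak P^{(n)}_{\sigma(1)},\dots,\mathfrak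 P^{(n)}_{\sigma(4)})$, $\sigma$ a power of the cycle $(1\,2\,3\,4)$, and these four are pairwise inequivalent. *)

theory Defs
  imports "HOL-Analysis.Analysis"
begin

definition orth_proj :: "real^'n^'n \<Rightarrow> bool" where
  "orth_proj P \<longleftrightarrow> transpose P = P \<and> P ** P = P"

definition cmat :: "real^'n^'m \<Rightarrow> complex^'n^'m" where
  "cmat A = (\<chi> i j. complex_of_real (A $ i $ j))"

definition csubspace :: "(complex^'n) set \<Rightarrow> bool" where
  "csubspace V \<longleftrightarrow> 0 \<in> V \<and> (\<forall>x\<in>V. \<forall>y\<in>V. x + y \<in> V) \<and> (\<forall>c::complex. \<forall>x\<in>V. c *s x \<in> V)"

text \<open>The quadruple satisfies conditions (i)-(iii) defining the P^(n), n = CARD('n).\<close>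
definition frakP_quadruple :: "real^'n^'n \<Rightarrow> real^'n^'n \<Rightarrow> real^'n^'n \<Rightarrow> real^'n^'n \<Rightarrow> bool" where
  "frakP_quadruple P1 P2 P3 P4 \<longleftrightarrow>
     orth_proj P1 \<and> orth_proj P2 \<and> orth_proj P3 \<and> orth_proj P4 \<and>
     P1 + P2 + P3 + P4 = (2 - 1 / real CARD('n)) *\<^sub>R mat 1 \<and>
     int (rank P1) = int CARD('n) div 2 - (-1) ^ CARD('n) \<and>
     rank P2 = CARD('n) div 2 \<and> rank P3 = CARD('n) div 2 \<and> rank P4 = CARD('n) div 2 \<and>
     (\<forall>V. csubspace V \<and> (\<forall>P\<in>{P1, P2, P3, P4}. \<forall>x\<in>V. cmat P *v x \<in> V)
          \<longrightarrow> V = {0} \<or> V = UNIV)"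

end

theory Submission
  imports Defs
begin

lemma proj_idem: "orth_proj P \<Longrightarrow> P *v (P *v x) = P *v x"
  by (simp add: orth_proj_def matrix_vector_mul_assoc)

lemma proj_sym: "orth_proj (P::real^'n^'n) \<Longrightarrow> x \<bullet> (P *v y) = (P *v x) \<bullet> y"
proof -
  assume "orth_proj P"
  hence "transpose P = P" by (simp add: orth_proj_def)
  have "x \<bullet> (P *v y) = (x v* P) \<bullet> y" by (simp add: dot_lmul_matrix)
  also have "x v* P = transpose P *v x" by simp
  finally show ?thesis using \<open>transpose P = P\<close> by simp
qed

lemma pair_swap:
  fixes Q1 Q2 :: "real^'n^'n"
  assumes "orth_proj Q1" "orth_proj Q2" "(Q1 + Q2) *v x = mu *\<^sub>R x"
  shows "(Q1 + Q2) *v ((Q1 - Q2) *v x) = (2 - mu) *\<^sub>R ((Q1 - Q2) *v x)"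
proof -
  have i1: "Q1 *v (Q1 *v x) = Q1 *v x" and i2: "Q2 *v (Q2 *v x) = Q2 *v x"
    using proj_idem assms(1,2) by blast+
  have "Q1 *v ((Q1 + Q2) *v x) = mu *\<^sub>R (Q1 *v x)" using assms(3) by (simp add: matrix_vector_mult_scaleR)
  hence a1: "Q1 *v (Q2 *v x) = mu *\<^sub>R (Q1 *v x) - Q1 *v x"
    using i1 by (simp add: matrix_vector_mult_add_rdistrib matrix_vector_right_distrib algebra_simps)
  have "Q2 *v ((Q1 + Q2) *v x) = mu *\<^sub>R (Q2 *v x)" using assms(3) by (simp add: matrix_vector_mult_scaleR)
  hence a2: "Q2 *v (Q1 *v x) = mu *\<^sub>R (Q2 *v x) - Q2 *v x"
    using i2 by (simp add: matrix_vector_mult_add_rdistrib matrix_vector_right_distrib algebra_simps)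
  have "(Q1 + Q2) *v ((Q1 - Q2) *v x) = (Q1 *v x - (mu *\<^sub>R (Q1 *v x) - Q1 *v x)) + ((mu *\<^sub>R (Q2 *v x) - Q2 *v x) - Q2 *v x)"
    by (simp add: matrix_vector_mult_add_rdistrib matrix_vector_mult_diff_rdistrib
        matrix_vector_right_distrib matrix_vector_mult_diff_distrib i1 i2 a1 a2)
  also have "\<dots> = (2 - mu) *\<^sub>R ((Q1 - Q2) *v x)"
    by (simp add: matrix_vector_mult_diff_rdistrib vec_eq_iff algebra_simps)
  finally show ?thesis .
qed

lemma pair_sq:
  fixes Q1 Q2 :: "real^'n^'n"
  assumes "orth_proj Q1" "orth_proj Q2"
  shows "(Q1 - Q2) *v ((Q1 - Q2) *v x) = 2 *\<^sub>R ((Q1 + Q2) *v x) - (Q1 + Q2) *v ((Q1 + Q2) *v x)"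
proof -
  have i1: "Q1 *v (Q1 *v x) = Q1 *v x" and i2: "Q2 *v (Q2 *v x) = Q2 *v x"
    using proj_idem assms(1,2) by blast+
  have "(Q1 - Q2) *v ((Q1 - Q2) *v x) = Q1 *v x - Q1 *v (Q2 *v x) - (Q2 *v (Q1 *v x) - Q2 *v x)"
    by (simp add: matrix_vector_mult_diff_rdistrib matrix_vector_mult_diff_distrib i1 i2)
  moreover have "(Q1 + Q2) *v ((Q1 + Q2) *v x) = Q1 *v x + Q1 *v (Q2 *v x) + (Q2 *v (Q1 *v x) + Q2 *v x)"
    by (simp add: matrix_vector_mult_add_rdistrib matrix_vector_right_distrib i1 i2)
  ultimately show ?thesis
    by (simp add: matrix_vector_mult_add_rdistrib vec_eq_iff algebra_simps)
qed

lemma sum_sym: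
  fixes Q1 Q2 :: "real^'n^'n"
  assumes "orth_proj Q1" "orth_proj Q2"
  shows "x \<bullet> ((Q1 + Q2) *v y) = ((Q1 + Q2) *v x) \<bullet> y"
  using proj_sym[OF assms(1)] proj_sym[OF assms(2)]
  by (simp add: matrix_vector_mult_add_rdistrib inner_add_left inner_add_right)

lemma span_inv:
  fixes M :: "real^'n^'n"
  assumes "\<forall>y\<in>X. M *v y \<in> span X" "x \<in> span X"
  shows "M *v x \<in> span X"
proof -
  have "M *v x \<in> (\<lambda>y. M *v y) ` span X" using assms(2) by blast
  also have "\<dots> = span ((\<lambda>y. M *v y) ` X)" by (simp add: span_linear_image)
  also have "\<dots> \<subseteq> span X" using assms(1) by (simp add: image_subset_iff span_minimal subspace_span)
  finally show ?thesis .
qed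

fun chain :: "real^'n^'n \<Rightarrow> real^'n^'n \<Rightarrow> real^'n \<Rightarrow> nat \<Rightarrow> real^'n" where
  "chain C D u 0 = u"
| "chain C D u (Suc k) = (if even k then D else C) *v chain C D u k"

definition evl :: "nat \<Rightarrow> nat \<Rightarrow> real" where
  "evl n k = (if even k then 1 + real k / real n else 1 - real (k + 1) / real n)"

lemma evl_inj:
  assumes "n > 0" "evl n j = evl n k" shows "j = k"
proof -
  have np: "real n > 0" using assms by simp
  consider "even j" "even k" | "even j" "odd k" | "odd j" "even k" | "odd j" "odd k" by blast
  then show ?thesis
  proof cases
    case 1 then show ?thesis using assms np by (simp add: evl_def divide_simps)
  next
    case 2
    hence "real j / real n + real (k + 1) / real n = 0" using assms by (simp add: evl_def)
    moreover have "real (k+1) / real n > 0" using np by simp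
    moreover have "real j / real n \<ge> 0" using np by simp
    ultimately show ?thesis by linarith
  next
    case 3
    hence "real k / real n + real (j + 1) / real n = 0" using assms by (simp add: evl_def)
    moreover have "real (j+1) / real n > 0" using np by simp
    moreover have "real k / real n \<ge> 0" using np by simp
    ultimately show ?thesis by linarith
  next
    case 4 then show ?thesis using assms np by (simp add: evl_def divide_simps)
  qed
qed

lemma re_cmat: "(\<chi> i. Re ((cmat P *v x) $ i)) = P *v (\<chi> i. Re (x $ i))"
  by (simp add: vec_eq_iff matrix_vector_mult_def cmat_def Re_sum)

lemma im_cmat: "(\<chi> i. Im ((cmat P *v x) $ i)) = P *v (\<chi> i. Im (x $ i))"
  by (simp add: vec_eq_iff matrix_vector_mult_def cmat_def Im_sum)

lemma key:
  fixes Q1 Q2 P3 P4 :: "real^'n^'n" and u :: "real^'n"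
  assumes p1: "orth_proj Q1" and p2: "orth_proj Q2" and p3: "orth_proj P3" and p4: "orth_proj P4"
    and sum: "Q1 + Q2 + P3 + P4 = (2 - 1 / real CARD('n)) *\<^sub>R mat 1"
    and irr: "\<forall>V. csubspace V \<and> (\<forall>P\<in>{Q1, Q2, P3, P4}. \<forall>x\<in>V. cmat P *v x \<in> V) \<longrightarrow> V = {0} \<or> V = UNIV"
    and u1: "Q1 *v u = u" and u2: "Q2 *v u = 0" and u0: "u \<noteq> 0"
  shows "(CARD('n) - 1) div 2 + 1 \<le> rank Q1"
proof -
  define n where "n = CARD('n)"
  define g where "g = 2 - 1 / real n"
  define A where "A = Q1 + Q2"
  define B where "B = P3 + P4"
  define C where "C = Q1 - Q2"
  define D where "D = P3 - P4"
  define v where "v = chain C D u"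
  have npos: "n > 0" unfolding n_def by simp
  have v0: "v 0 = u" and vS: "\<And>k. v (Suc k) = (if even k then D else C) *v v k"
    by (simp_all add: v_def)
  have Bx: "B *v x = g *\<^sub>R x - A *v x" for x
  proof -
    have "(A + B) *v x = g *\<^sub>R x" using sum
      by (simp add: A_def B_def g_def n_def add.assoc scaleR_matrix_vector_assoc[symmetric])
    thus ?thesis by (simp add: matrix_vector_mult_add_rdistrib algebra_simps)
  qed
  have Aev: "A *v v k = evl n k *\<^sub>R v k" for k
  proof (induction k)
    case 0 then show ?case using u1 u2 by (simp add: v0 A_def evl_def matrix_vector_mult_add_rdistrib)
  next
    case (Suc k)
    show ?case
    proof (cases "even k")
      case True
      have "B *v v k = (g - evl n k) *\<^sub>R v k" using Suc Bx[of "v k"] by (simp add: scaleR_diff_left)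
      hence "B *v (D *v v k) = (2 - (g - evl n k)) *\<^sub>R (D *v v k)"
        using pair_swap[OF p3 p4] unfolding B_def D_def by blast
      hence "A *v (D *v v k) = (g - 2 + g - evl n k) *\<^sub>R (D *v v k)"
        using Bx[of "D *v v k"] by (simp add: vec_eq_iff algebra_simps)
      moreover have "g - 2 + g - evl n k = evl n (Suc k)" using True npos
        by (simp add: g_def evl_def field_simps)
      ultimately show ?thesis using True by (simp add: vS)
    next
      case False
      have "A *v (C *v v k) = (2 - evl n k) *\<^sub>R (C *v v k)"
        using pair_swap[OF p1 p2] Suc unfolding A_def C_def by blast
      moreover have "2 - evl n k = evl n (Suc k)" using False npos
        by (simp add: evl_def field_simps)
      ultimately show ?thesis using False by (simp add: vS)
    qed
  qed
  have Bev: "B *v v k = (g - evl n k) *\<^sub>R v k" for k using Aev[of k] Bx[of "v k"] by (simp add: scaleR_diff_left)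
  define S where "S = span (range v)"
  have vin: "v k \<in> S" for k unfolding S_def by (simp add: span_base)
  have AS: "A *v v k \<in> S" for k using Aev vin unfolding S_def by (simp add: span_scale)
  have BS: "B *v v k \<in> S" for k using Bev vin unfolding S_def by (simp add: span_scale)
  have CS: "C *v v k \<in> S" for k
  proof (cases k)
    case 0 then show ?thesis using u1 u2 vin[of 0] by (simp add: v0 C_def matrix_vector_mult_diff_rdistrib)
  next
    case (Suc j)
    show ?thesis
    proof (cases "even j")
      case True
      then show ?thesis using vin[of "Suc k"] Suc by (simp add: vS)
    next
      case False
      have "C *v v k = 2 *\<^sub>R (A *v v j) - A *v (A *v v j)"
        using False Suc pair_sq[OF p1 p2] by (simp add: vS A_def C_def)
      also have "\<dots> = (2 * evl n j - evl n j * evl n j) *\<^sub>R v j" by (simp add: Aev vec_eq_iff algebra_simps)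
      finally show ?thesis using vin unfolding S_def by (simp add: span_scale)
    qed
  qed
  have DS: "D *v v k \<in> S" for k
  proof (cases k)
    case 0 then show ?thesis using vin[of 1] by (simp add: vS)
  next
    case (Suc j)
    show ?thesis
    proof (cases "even j")
      case False
      then show ?thesis using vin[of "Suc k"] Suc by (simp add: vS)
    next
      case True
      have "D *v v k = 2 *\<^sub>R (B *v v j) - B *v (B *v v j)"
        using True Suc pair_sq[OF p3 p4] by (simp add: vS B_def D_def)
      also have "\<dots> = (2 * (g - evl n j) - (g - evl n j) * (g - evl n j)) *\<^sub>R v j" by (simp add: Bev vec_eq_iff algebra_simps)
      finally show ?thesis using vin unfolding S_def by (simp add: span_scale)
    qed
  qed
  have inv: "M *v x \<in> S" if "x \<in> S" "\<forall>k. M *v v k \<in> S" for M x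
    using span_inv[of "range v" M x] that unfolding S_def by auto
  have invA: "A *v x \<in> S" if "x \<in> S" for x using inv AS that by blast
  have invB: "B *v x \<in> S" if "x \<in> S" for x using inv BS that by blast
  have invC: "C *v x \<in> S" if "x \<in> S" for x using inv CS that by blast
  have invD: "D *v x \<in> S" if "x \<in> S" for x using inv DS that by blast
  have subS: "subspace S" unfolding S_def by (rule subspace_span)
  have sS: "x \<in> S \<Longrightarrow> y \<in> S \<Longrightarrow> (1/2) *\<^sub>R (x + y) \<in> S" "x \<in> S \<Longrightarrow> y \<in> S \<Longrightarrow> (1/2) *\<^sub>R (x - y) \<in> S" for x y
    unfolding S_def by (simp_all add: span_scale span_add span_diff)
  have Q1S: "Q1 *v x \<in> S" if "x \<in> S" for x
  proof -
    have "Q1 *v x = (1/2) *\<^sub>R (A *v x + C *v x)"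
      by (simp add: A_def C_def matrix_vector_mult_add_rdistrib matrix_vector_mult_diff_rdistrib scaleR_2[symmetric] algebra_simps)
    thus ?thesis using sS invA invC that by simp
  qed
  have Q2S: "Q2 *v x \<in> S" if "x \<in> S" for x
  proof -
    have "Q2 *v x = (1/2) *\<^sub>R (A *v x - C *v x)"
      by (simp add: A_def C_def matrix_vector_mult_add_rdistrib matrix_vector_mult_diff_rdistrib scaleR_2[symmetric] algebra_simps)
    thus ?thesis using sS invA invC that by simp
  qed
  have P3S: "P3 *v x \<in> S" if "x \<in> S" for x
  proof -
    have "P3 *v x = (1/2) *\<^sub>R (B *v x + D *v x)"
      by (simp add: B_def D_def matrix_vector_mult_add_rdistrib matrix_vector_mult_diff_rdistrib scaleR_2[symmetric] algebra_simps)
    thus ?thesis using sS invB invD that by simp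
  qed
  have P4S: "P4 *v x \<in> S" if "x \<in> S" for x
  proof -
    have "P4 *v x = (1/2) *\<^sub>R (B *v x - D *v x)"
      by (simp add: B_def D_def matrix_vector_mult_add_rdistrib matrix_vector_mult_diff_rdistrib scaleR_2[symmetric] algebra_simps)
    thus ?thesis using sS invB invD that by simp
  qed
  define re :: "complex^'n \<Rightarrow> real^'n" where "re x = (\<chi> i. Re (x $ i))" for x
  define im :: "complex^'n \<Rightarrow> real^'n" where "im x = (\<chi> i. Im (x $ i))" for x
  define V where "V = {x. re x \<in> S \<and> im x \<in> S}"
  have S0: "0 \<in> S" unfolding S_def by (rule span_zero)
  have Sadd: "x \<in> S \<Longrightarrow> y \<in> S \<Longrightarrow> x + y \<in> S" for x y unfolding S_def by (rule span_add)
  have Sdiff: "x \<in> S \<Longrightarrow> y \<in> S \<Longrightarrow> x - y \<in> S" for x y unfolding S_def by (rule span_diff)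
  have Ssc: "x \<in> S \<Longrightarrow> c *\<^sub>R x \<in> S" for x c unfolding S_def by (rule span_scale)
  have csub: "csubspace V"
    unfolding csubspace_def
  proof (intro conjI ballI allI)
    show "0 \<in> V" using S0 by (simp add: V_def re_def im_def vec_eq_iff zero_vec_def)
  next
    fix x y assume "x \<in> V" "y \<in> V"
    moreover have "re (x + y) = re x + re y" "im (x + y) = im x + im y"
      by (simp_all add: re_def im_def vec_eq_iff)
    ultimately show "x + y \<in> V" using Sadd by (simp add: V_def)
  next
    fix c :: complex and x assume "x \<in> V"
    moreover have "re (c *s x) = Re c *\<^sub>R re x - Im c *\<^sub>R im x" "im (c *s x) = Re c *\<^sub>R im x + Im c *\<^sub>R re x"
      by (simp_all add: re_def im_def vec_eq_iff)
    ultimately show "c *s x \<in> V" using Sadd Sdiff Ssc by (simp add: V_def)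
  qed
  have cinv: "cmat P *v x \<in> V" if "x \<in> V" "\<And>y. y \<in> S \<Longrightarrow> P *v y \<in> S" for P x
  proof -
    have "re (cmat P *v x) = P *v re x" "im (cmat P *v x) = P *v im x"
      unfolding re_def im_def by (rule re_cmat, rule im_cmat)
    thus ?thesis using that by (simp add: V_def)
  qed
  have Vinv: "\<forall>P\<in>{Q1, Q2, P3, P4}. \<forall>x\<in>V. cmat P *v x \<in> V"
    using cinv Q1S Q2S P3S P4S by blast
  define xu :: "complex^'n" where "xu = (\<chi> i. complex_of_real (u $ i))"
  have xuV: "xu \<in> V" using vin[of 0] S0 by (simp add: V_def xu_def re_def im_def v0 zero_vec_def)
  have "xu \<noteq> 0"
  proof
    assume "xu = 0"
    hence "u = 0" by (simp add: xu_def vec_eq_iff)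
    thus False using u0 by simp
  qed
  hence "V \<noteq> {0}" using xuV by blast
  hence VU: "V = UNIV" using irr csub Vinv by blast
  have SU: "S = UNIV"
  proof (intro set_eqI iffI)
    fix y :: "real^'n"
    have "(\<chi> i. complex_of_real (y $ i)) \<in> V" using VU by simp
    moreover have "re (\<chi> i. complex_of_real (y $ i)) = y" by (simp add: re_def vec_eq_iff)
    ultimately show "y \<in> S" by (simp add: V_def)
  qed simp
  have dimS: "dim S = n" using SU by (simp add: n_def)
  have orth: "v j \<bullet> v k = 0" if "j \<noteq> k" for j k
  proof -
    have "evl n j * (v j \<bullet> v k) = (A *v v j) \<bullet> v k" by (simp add: Aev)
    also have "\<dots> = v j \<bullet> (A *v v k)" using sum_sym[OF p1 p2] by (simp add: A_def)
    also have "\<dots> = evl n k * (v j \<bullet> v k)" by (simp add: Aev)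
    finally have "(evl n j - evl n k) * (v j \<bullet> v k) = 0" by (simp add: left_diff_distrib)
    moreover have "evl n j \<noteq> evl n k" using evl_inj[OF npos] that by blast
    ultimately show ?thesis by simp
  qed
  have nz: "v k \<noteq> 0" if "k < n" for k
  proof
    assume vk: "v k = 0"
    have z: "v (k + i) = 0" for i by (induction i) (simp_all add: vk vS)
    have "range v \<subseteq> insert 0 (v ` {..<k})"
    proof
      fix y assume "y \<in> range v"
      then obtain l where l: "y = v l" by blast
      show "y \<in> insert 0 (v ` {..<k})"
      proof (cases "l < k")
        case True then show ?thesis using l by blast
      next
        case False
        then have "l = k + (l - k)" by simp
        then have "v l = 0" using z by metis
        then show ?thesis using l by blast
      qed
    qed
    hence "S \<subseteq> span (v ` {..<k})" unfolding S_def
      by (metis span_insert_0 span_mono)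
    hence "dim S \<le> card (v ` {..<k})" by (simp add: dim_le_card)
    also have "\<dots> \<le> k" using card_image_le[of "{..<k}" v] by simp
    finally show False using dimS that by simp
  qed
  have Q1dec: "Q1 *v y = (1/2) *\<^sub>R (A *v y + C *v y)" for y
    by (simp add: A_def C_def matrix_vector_mult_add_rdistrib matrix_vector_mult_diff_rdistrib vec_eq_iff algebra_simps)
  define m where "m = (n - 1) div 2"
  define I where "I = {0..m}"
  define w where "w j = (if j = 0 then u else Q1 *v v (2 * j))" for j
  have wform: "w (Suc i) = (evl n (2*i+2) / 2) *\<^sub>R v (2*i+2)
      + ((2 * evl n (2*i+1) - evl n (2*i+1) * evl n (2*i+1)) / 2) *\<^sub>R v (2*i+1)" for i
  proof -
    have e1: "v (2 * Suc i) = C *v v (2*i+1)" by (simp add: vS)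
    have e2: "C *v (C *v v (2*i+1)) = (2 * evl n (2*i+1) - evl n (2*i+1) * evl n (2*i+1)) *\<^sub>R v (2*i+1)"
    proof -
      have "C *v (C *v v (2*i+1)) = 2 *\<^sub>R (A *v v (2*i+1)) - A *v (A *v v (2*i+1))"
        using pair_sq[OF p1 p2] by (simp add: A_def C_def)
      also have "\<dots> = (2 * evl n (2*i+1) - evl n (2*i+1) * evl n (2*i+1)) *\<^sub>R v (2*i+1)"
        by (simp add: Aev vec_eq_iff algebra_simps)
      finally show ?thesis .
    qed
    have e3: "A *v v (2*i+2) = evl n (2*i+2) *\<^sub>R v (2*i+2)" by (rule Aev)
    have "w (Suc i) = (1/2) *\<^sub>R (A *v v (2*i+2) + C *v (C *v v (2*i+1)))"
      using e1 Q1dec by (simp add: w_def)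
    also have "\<dots> = (evl n (2*i+2) / 2) *\<^sub>R v (2*i+2)
      + ((2 * evl n (2*i+1) - evl n (2*i+1) * evl n (2*i+1)) / 2) *\<^sub>R v (2*i+1)"
      unfolding e2 e3 by (simp add: scaleR_add_right)
    finally show ?thesis .
  qed
  have w0: "w 0 = v 0" by (simp add: w_def v0)
  have wnz: "w j \<noteq> 0" if "j \<in> I" for j
  proof (cases j)
    case 0 then show ?thesis using u0 by (simp add: w_def)
  next
    case (Suc i)
    have "2*i+2 < n" using that Suc npos by (simp add: I_def m_def)
    hence nz2: "v (2*i+2) \<noteq> 0" by (rule nz)
    have "(2 + 2 * real i) / real n \<ge> 0" using npos by simp
    moreover have "evl n (2*i+2) = 1 + (2 + 2 * real i) / real n" by (simp add: evl_def)
    ultimately have ev: "evl n (2*i+2) > 0" by linarith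
    have "w j \<bullet> v (2*i+2) = (evl n (2*i+2) / 2) * (v (2*i+2) \<bullet> v (2*i+2))"
      using orth[of "2*i+1" "2*i+2"] by (simp add: Suc wform inner_add_left)
    moreover have "v (2*i+2) \<bullet> v (2*i+2) > 0" using nz2 by simp
    hence "(evl n (2*i+2) / 2) * (v (2*i+2) \<bullet> v (2*i+2)) > 0" using ev by simp
    ultimately have "w j \<bullet> v (2*i+2) \<noteq> 0" by linarith
    thus ?thesis by auto
  qed
  have worth: "w j \<bullet> w k = 0" if jk: "j \<noteq> k" for j k
  proof (cases j)
    case 0
    then obtain i where k: "k = Suc i" using jk by (cases k) auto
    show ?thesis using orth[of 0 "2*i+2"] orth[of 0 "2*i+1"]
      by (simp add: 0 k wform w0 inner_add_right del: One_nat_def)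
  next
    case (Suc i)
    show ?thesis
    proof (cases k)
      case 0
      show ?thesis using orth[of "2*i+2" 0] orth[of "2*i+1" 0]
        by (simp add: 0 Suc wform w0 inner_add_left del: One_nat_def)
    next
      case (Suc i')
      have "i \<noteq> i'" using jk \<open>j = Suc i\<close> Suc by simp
      then show ?thesis
        using orth[of "2*i+2" "2*i'+2"] orth[of "2*i+2" "2*i'+1"] orth[of "2*i+1" "2*i'+2"] orth[of "2*i+1" "2*i'+1"]
        by (simp add: Suc \<open>j = Suc i\<close> wform inner_add_left inner_add_right del: One_nat_def)
    qed
  qed
  have winj: "inj_on w I"
  proof (rule inj_onI)
    fix j k assume "j \<in> I" "k \<in> I" "w j = w k"
    show "j = k"
    proof (rule ccontr)
      assume "j \<noteq> k"
      have "w j \<bullet> w j = 0" using worth[OF \<open>j \<noteq> k\<close>] \<open>w j = w k\<close> by simp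
      thus False using wnz \<open>j \<in> I\<close> by simp
    qed
  qed
  have indep: "independent (w ` I)"
  proof (rule pairwise_orthogonal_independent)
    show "pairwise orthogonal (w ` I)"
      unfolding pairwise_def orthogonal_def
    proof (intro ballI impI)
      fix x y assume "x \<in> w ` I" "y \<in> w ` I" "x \<noteq> y"
      then obtain j k where "x = w j" "y = w k" by blast
      with \<open>x \<noteq> y\<close> have "j \<noteq> k" by blast
      with worth show "x \<bullet> y = 0" using \<open>x = w j\<close> \<open>y = w k\<close> by simp
    qed
    show "0 \<notin> w ` I"
    proof
      assume "0 \<in> w ` I"
      then obtain j where "j \<in> I" "w j = 0" by (metis imageE)
      thus False using wnz by blast
    qed
  qed
  have wsub: "w ` I \<subseteq> range (\<lambda>x. Q1 *v x)"
  proof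
    fix y assume "y \<in> w ` I"
    then obtain j where "y = w j" by blast
    show "y \<in> range (\<lambda>x. Q1 *v x)"
    proof (cases "j = 0")
      case True then show ?thesis using u1 \<open>y = w j\<close> by (metis rangeI w_def)
    next
      case False then show ?thesis using \<open>y = w j\<close> by (simp add: w_def)
    qed
  qed
  have "card (w ` I) = m + 1" using winj by (simp add: card_image I_def)
  moreover have "card (w ` I) \<le> rank Q1"
    using independent_card_le_dim[OF wsub indep] by (simp add: rank_dim_range)
  ultimately show ?thesis by (simp add: m_def n_def)
qed

theorem proposition4p5:
  fixes P1 P2 P3 P4 :: "real^'n^'n" and lam :: real and e :: "real^'n"
  assumes "frakP_quadruple P1 P2 P3 P4"
    and "(P3 + P4) *v e = lam *\<^sub>R e"
    and "norm e = 1"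
  shows "(lam \<noteq> 1 - 1 / real CARD('n) \<longrightarrow>
            e \<bullet> (P1 *v e) = 1 - 1 / (2 * real CARD('n)) - lam / 2 \<and>
            e \<bullet> (P2 *v e) = 1 - 1 / (2 * real CARD('n)) - lam / 2)
       \<and> (lam = 1 - 1 / real CARD('n) \<longrightarrow>
            (even CARD('n) \<longrightarrow> e \<bullet> (P1 *v e) = 0 \<and> e \<bullet> (P2 *v e) = 1) \<and>
            (odd CARD('n) \<longrightarrow> e \<bullet> (P1 *v e) = 1 \<and> e \<bullet> (P2 *v e) = 0))"
proof -
  define n where "n = CARD('n)"
  define g where "g = 2 - 1 / real n"
  note Q = assms(1)[unfolded frakP_quadruple_def]
  have o1: "orth_proj P1" and o2: "orth_proj P2" and o3: "orth_proj P3" and o4: "orth_proj P4"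
    using Q by blast+
  have sumQ0: "P1 + P2 + P3 + P4 = (2 - 1 / real CARD('n)) *\<^sub>R mat 1" using Q by blast
  have sumQ: "P1 + P2 + P3 + P4 = g *\<^sub>R mat 1" using sumQ0 by (simp add: g_def n_def)
  have r1: "int (rank P1) = int n div 2 - (-1) ^ n" and r2: "rank P2 = n div 2" using Q by (simp_all add: n_def)
  have irr: "\<forall>V. csubspace V \<and> (\<forall>P\<in>{P1, P2, P3, P4}. \<forall>x\<in>V. cmat P *v x \<in> V) \<longrightarrow> V = {0} \<or> V = UNIV"
    using Q by blast
  define a where "a = P1 *v e"
  define b where "b = P2 *v e"
  define mu where "mu = g - lam"
  have "(P1 + P2 + P3 + P4) *v e = g *\<^sub>R e" using sumQ by (simp add: scaleR_matrix_vector_assoc[symmetric])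
  hence "a + b + lam *\<^sub>R e = g *\<^sub>R e" using assms(2) by (simp add: a_def b_def algebra_simps)
  hence ab: "a + b = mu *\<^sub>R e" by (simp add: mu_def algebra_simps)
  have "P1 *v (a + b) = mu *\<^sub>R a" using ab by (simp add: a_def matrix_vector_mult_scaleR)
  hence h1: "P1 *v b = (mu - 1) *\<^sub>R a"
    using proj_idem[OF o1, of e] by (simp add: a_def matrix_vector_right_distrib algebra_simps)
  have "P2 *v (a + b) = mu *\<^sub>R b" using ab by (simp add: b_def matrix_vector_mult_scaleR)
  hence h2: "P2 *v a = (mu - 1) *\<^sub>R b"
    using proj_idem[OF o2, of e] by (simp add: b_def matrix_vector_right_distrib algebra_simps)
  have "e \<bullet> (P1 *v b) = a \<bullet> b" using proj_sym[OF o1] a_def by simp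
  hence e1: "(mu - 1) * (e \<bullet> a) = a \<bullet> b" using h1 by simp
  have "e \<bullet> (P2 *v a) = b \<bullet> a" using proj_sym[OF o2] b_def by simp
  hence e2: "(mu - 1) * (e \<bullet> b) = a \<bullet> b" using h2 by (simp add: inner_commute)
  have ee: "e \<bullet> e = 1" using assms(3) by (simp add: dot_square_norm)
  have es: "e \<bullet> a + e \<bullet> b = mu" using ab ee by (metis inner_add_right inner_scaleR_right mult.right_neutral)
  have npos: "n > 0" unfolding n_def by simp
  have partI: "e \<bullet> (P1 *v e) = 1 - 1 / (2 * real CARD('n)) - lam / 2 \<and>
            e \<bullet> (P2 *v e) = 1 - 1 / (2 * real CARD('n)) - lam / 2"
    if "lam \<noteq> 1 - 1 / real CARD('n)"
  proof -
    have "mu \<noteq> 1" using that by (simp add: mu_def g_def n_def)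
    moreover have "(mu - 1) * (e \<bullet> a - e \<bullet> b) = 0" using e1 e2 by (simp add: right_diff_distrib)
    ultimately have eq: "e \<bullet> a = e \<bullet> b" by simp
    have "mu / 2 = 1 - 1 / (2 * real CARD('n)) - lam / 2" by (simp add: mu_def g_def n_def field_simps)
    thus ?thesis using eq es by (simp add: a_def b_def)
  qed
  have partII: "(even CARD('n) \<longrightarrow> e \<bullet> (P1 *v e) = 0 \<and> e \<bullet> (P2 *v e) = 1) \<and>
            (odd CARD('n) \<longrightarrow> e \<bullet> (P1 *v e) = 1 \<and> e \<bullet> (P2 *v e) = 0)"
    if lam: "lam = 1 - 1 / real CARD('n)"
  proof -
    have mu1: "mu = 1" using lam by (simp add: mu_def g_def n_def)
    have ab1: "a + b = e" using ab mu1 by simp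
    have pb: "P1 *v b = 0" using h1 mu1 by simp
    have pa: "P2 *v a = 0" using h2 mu1 by simp
    have aa: "P1 *v a = a" using proj_idem[OF o1] a_def by simp
    have bb: "P2 *v b = b" using proj_idem[OF o2] b_def by simp
    have A: "a = 0" if ev: "even CARD('n)"
    proof (rule ccontr)
      assume "a \<noteq> 0"
      from key[OF o1 o2 o3 o4 sumQ0 irr aa pa this]
      have "(n - 1) div 2 + 1 \<le> rank P1" by (simp add: n_def)
      moreover have "int n div 2 - (-1) ^ n = int n div 2 - 1" using ev by (simp add: n_def)
      moreover have "int ((n - 1) div 2 + 1) = int n div 2" using ev npos unfolding n_def by presburger
      ultimately show False using r1 by linarith
    qed
    have B: "b = 0" if od: "odd CARD('n)"
    proof (rule ccontr)
      assume "b \<noteq> 0"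
      have sum2: "P2 + P1 + P3 + P4 = (2 - 1 / real CARD('n)) *\<^sub>R mat 1"
        using sumQ0 by (simp add: add.commute add.left_commute)
      have irr2: "\<forall>V. csubspace V \<and> (\<forall>P\<in>{P2, P1, P3, P4}. \<forall>x\<in>V. cmat P *v x \<in> V) \<longrightarrow> V = {0} \<or> V = UNIV"
        using irr by (simp add: insert_commute)
      from key[OF o2 o1 o3 o4 sum2 irr2 bb pb \<open>b \<noteq> 0\<close>]
      have "(n - 1) div 2 + 1 \<le> rank P2" by (simp add: n_def)
      then show False using r2 od unfolding n_def by presburger
    qed
    show ?thesis
    proof (intro conjI impI)
      assume "even CARD('n)"
      with A have "b = e" using ab1 by simp
      with A \<open>even CARD('n)\<close> show "e \<bullet> (P1 *v e) = 0" "e \<bullet> (P2 *v e) = 1"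
        using ee by (simp_all add: a_def[symmetric] b_def[symmetric])
    next
      assume "odd CARD('n)"
      with B have "a = e" using ab1 by simp
      with B \<open>odd CARD('n)\<close> show "e \<bullet> (P1 *v e) = 1" "e \<bullet> (P2 *v e) = 0"
        using ee by (simp_all add: a_def[symmetric] b_def[symmetric])
    qed
  qed
  show ?thesis using partI partII by blast
qed

end
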